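(* Let $\Sigma=(I,X,\mathcal U,\phi,Y,h)$ be a forward complete control system with outputs. Then the following statements are equivalent: (1) $\Sigma$ is IOS; (2) $\Sigma$ is OUAG, OCEP and BORS; (3) $\Sigma$ is OUAG, OULS and BORS; (4) $\Sigma$ is OUAG and OUGS; (5) $\Sigma$ is OCAG and OULS.
   Context: Let $I\in\{\mathbb N_0,\mathbb R_0^+\}$. A forward complete control system with outputs $\Sigma=(I,X,\mathcal U,\phi,Y,h)$ consists of: a normed space $(X,\|\cdot\|_X)$; a vector space $U$ and a normed linear subspace $(\mathcal U,\|\cdot\|_{\mathcal U})$ of $\{u:I\to U\}$ such that for all $u\in\mathcal U$ and $\tau\in I$, $u(\cdot+\tau)\in\mathcal U$ with $\|u(\cdot+\tau)\|_{\mathcal U}\le\|u\|_{\mathcal U}$, and for all $t_2\ge t_1\ge 0$ the function $u|_{[t_1,t_2]}$ (equal to $u$ on $[t_1,t_2]$ and $0$ elsewhere) lies in $\mathcal U$ with $\|u|_{[t_1,t_2]}\|_{\mathcal U}\le\|u\|_{\mathcal U}$; a map $\phi:I\times X\times\mathcal U\to X$ with $\phi(0,x,u)=x$, causality (if $u,\tilde u\in\mathcal U$ agree on $[0,t]$ then $\phi(t,x,u)=\phi(t,x,\tilde u)$), and cocycle property $\phi(t+s,x,u)=\phi(s,\phi(t,x,u),u(t+\cdot))$ for all $t,s\in I$; a normed space $(Y,\|\cdot\|_Y)$ and a map $h:X\times U\to Y$. Write $y(t,x,u)=h(\phi(t,x,u),u(t))$. $B_r=\{x\in X:\|x\|_X<r\}$,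 $B_{r,\mathcal U}=\{u\in\mathcal U:\|u\|_{\mathcal U}<r\}$. $\mathcal K$: continuous strictly increasing $\gamma:\mathbb R_0^+\to\mathbb R_0^+$ with $\gamma(0)=0$; $\mathcal K_\infty$: unbounded $\mathcal K$-functions; $\mathcal L$: continuous decreasing functions tending to $0$; $\mathcal{KL}$: $\beta$ with $\beta(\cdot,t)\in\mathcal K$ for all $t$ and $\beta(r,\cdot)\in\mathcal L$ for all $r>0$. All statements below quantify over $x\in X$, $u\in\mathcal U$, $t\in I$. IOS: $\exists\beta\in\mathcal{KL},\gamma\in\mathcal K_\infty$ with $\|y(t,x,u)\|_Y\le\beta(\|x\|_X,t)+\gamma(\|u\|_{\mathcal U})$ for all $x,u,t$. OCEP: for every $\tau\in I$ and $\varepsilon>0$ there is $\delta>0$ such that $t\le\tau$, $\|x\|_X\le\delta$, $\|u\|_{\mathcal U}\le\delta$ imply $\|y(t,x,u)\|_Y\le\varepsilon$. BORS: for all $C>0$, $\tau\in I$: $\sup\{\|y(t,x,u)\|_Y:\|x\|_X<C,\|u\|_{\mathcal U}<C,t<\tau\}<\infty$. OULS: $\exists r>0,\sigma,\gamma\in\mathcal K_\infty$ such that $\|y(t,x,u)\|_Y\le\sigma(\|x\|_X)+\gamma(\|u\|_{\mathcal U})$ for all $x\in B_r,u\in B_{r,\mathcal U},t\in I$. OUGS: $\exists\sigma,\gamma\in\mathcal K_\infty$ with the same inequality for all $x\in X,u\in\mathcal U,t\in I$. OUAG: $\exists\gamma\in\mathcal K_\infty$ such that for all $\varepsilon,r,s>0$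 there is $\tau\in I$ with $\|y(t,x,u)\|_Y\le\varepsilon+\gamma(\|u\|_{\mathcal U})$ for all $x\in B_r$, $u\in B_{s,\mathcal U}$, $t\ge\tau$. OCAG: $\exists\beta\in\mathcal{KL},\gamma\in\mathcal K_\infty,c\ge0$ with $\|y(t,x,u)\|_Y\le\beta(\|x\|_X+c,t)+\gamma(\|u\|_{\mathcal U})$ for all $x,u,t$. *)

theory Defs
  imports "HOL-Analysis.Analysis"
begin

definition class_K :: "(real \<Rightarrow> real) \<Rightarrow> bool" where
  "class_K g \<longleftrightarrow> continuous_on {0..} g \<and> strict_mono_on {0..} g \<and> g 0 = 0"

definition class_Kinf :: "(real \<Rightarrow> real) \<Rightarrow> bool" where
  "class_Kinf g \<longleftrightarrow> class_K g \<and> (\<forall>M. \<exists>r\<ge>0. g r > M)"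

definition class_L :: "(real \<Rightarrow> real) \<Rightarrow> bool" where
  "class_L f \<longleftrightarrow> continuous_on {0..} f \<and> antimono_on {0..} f \<and>
     (f \<longlongrightarrow> 0) at_top"

definition class_KL :: "(real \<Rightarrow> real \<Rightarrow> real) \<Rightarrow> bool" where
  "class_KL \<beta> \<longleftrightarrow> (\<forall>t\<ge>0. class_K (\<lambda>r. \<beta> r t)) \<and> (\<forall>r>0. class_L (\<lambda>t. \<beta> r t))"

text \<open>Inputs are functions from time to the input value space 'u, represented as functions on
  the reals which vanish outside T.\<close>

definition shift_inp :: "real set \<Rightarrow> real \<Rightarrow> (real \<Rightarrow> 'u::zero) \<Rightarrow> real \<Rightarrow> 'u" where
  "shift_inp T \<tau> u = (\<lambda>t. if t \<in> T then u (t + \<tau>) else 0)"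

definition restr_inp :: "real \<Rightarrow> real \<Rightarrow> (real \<Rightarrow> 'u::zero) \<Rightarrow> real \<Rightarrow> 'u" where
  "restr_inp t1 t2 u = (\<lambda>t. if t1 \<le> t \<and> t \<le> t2 then u t else 0)"

definition ctrl_sys ::
  "real set \<Rightarrow> (real \<Rightarrow> 'u::real_vector) set \<Rightarrow> ((real \<Rightarrow> 'u) \<Rightarrow> real)
   \<Rightarrow> (real \<Rightarrow> 'x::real_normed_vector \<Rightarrow> (real \<Rightarrow> 'u) \<Rightarrow> 'x)
   \<Rightarrow> ('x \<Rightarrow> 'u \<Rightarrow> 'y::real_normed_vector) \<Rightarrow> bool" where
  "ctrl_sys T Us nU \<phi> h \<longleftrightarrow>
     (T = \<nat> \<or> T = {0..}) \<and>
     \<comment> \<open>Us is a linear subspace of the functions T \<rightarrow> U\<close>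
     (\<forall>u\<in>Us. \<forall>t. t \<notin> T \<longrightarrow> u t = 0) \<and>
     (\<lambda>_. 0) \<in> Us \<and> (\<forall>u\<in>Us. \<forall>v\<in>Us. (\<lambda>t. u t + v t) \<in> Us) \<and> (\<forall>a. \<forall>u\<in>Us. (\<lambda>t. a *\<^sub>R u t) \<in> Us) \<and>
     \<comment> \<open>nU is a norm on Us\<close>
     (\<forall>u\<in>Us. nU u \<ge> 0 \<and> (nU u = 0 \<longleftrightarrow> u = (\<lambda>_. 0))) \<and>
     (\<forall>a. \<forall>u\<in>Us. nU (\<lambda>t. a *\<^sub>R u t) = \<bar>a\<bar> * nU u) \<and>
     (\<forall>u\<in>Us. \<forall>v\<in>Us. nU (\<lambda>t. u t + v t) \<le> nU u + nU v) \<and>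
     \<comment> \<open>shift and restriction axioms\<close>
     (\<forall>u\<in>Us. \<forall>\<tau>\<in>T. shift_inp T \<tau> u \<in> Us \<and> nU (shift_inp T \<tau> u) \<le> nU u) \<and>
     (\<forall>u\<in>Us. \<forall>t1 t2. 0 \<le> t1 \<and> t1 \<le> t2 \<longrightarrow>
         restr_inp t1 t2 u \<in> Us \<and> nU (restr_inp t1 t2 u) \<le> nU u) \<and>
     \<comment> \<open>identity property\<close>
     (\<forall>x. \<forall>u\<in>Us. \<phi> 0 x u = x) \<and>
     \<comment> \<open>causality\<close>
     (\<forall>t\<in>T. \<forall>x. \<forall>u\<in>Us. \<forall>v\<in>Us. (\<forall>s\<in>{0..t}. u s = v s) \<longrightarrow> \<phi> t x u = \<phi> t x v) \<and>
     \<comment> \<open>cocycle property\<close>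
     (\<forall>t\<in>T. \<forall>s\<in>T. \<forall>x. \<forall>u\<in>Us. \<phi> (t + s) x u = \<phi> s (\<phi> t x u) (shift_inp T t u))"

definition outp :: "(real \<Rightarrow> 'x \<Rightarrow> (real \<Rightarrow> 'u) \<Rightarrow> 'x) \<Rightarrow> ('x \<Rightarrow> 'u \<Rightarrow> 'y)
   \<Rightarrow> real \<Rightarrow> 'x \<Rightarrow> (real \<Rightarrow> 'u) \<Rightarrow> 'y" where
  "outp \<phi> h t x u = h (\<phi> t x u) (u t)"

definition IOS where
  "IOS T Us nU \<phi> h \<longleftrightarrow> (\<exists>\<beta> \<gamma>. class_KL \<beta> \<and> class_Kinf \<gamma> \<and>
     (\<forall>x. \<forall>u\<in>Us. \<forall>t\<in>T. norm (outp \<phi> h t x u) \<le> \<beta> (norm x) t + \<gamma> (nU u)))"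

definition OCEP where
  "OCEP T Us nU \<phi> h \<longleftrightarrow> (\<forall>\<tau>\<in>T. \<forall>\<epsilon>>0. \<exists>\<delta>>0. \<forall>x. \<forall>u\<in>Us. \<forall>t\<in>T.
     t \<le> \<tau> \<and> norm x \<le> \<delta> \<and> nU u \<le> \<delta> \<longrightarrow> norm (outp \<phi> h t x u) \<le> \<epsilon>)"

definition BORS where
  "BORS T Us nU \<phi> h \<longleftrightarrow> (\<forall>C>0. \<forall>\<tau>\<in>T.
     bdd_above {norm (outp \<phi> h t x u) | t x u.
        norm x < C \<and> u \<in> Us \<and> nU u < C \<and> t \<in> T \<and> t < \<tau>})"

definition OULS where
  "OULS T Us nU \<phi> h \<longleftrightarrow> (\<exists>r>0. \<exists>\<sigma> \<gamma>. class_Kinf \<sigma> \<and> class_Kinf \<gamma> \<and>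
     (\<forall>x. \<forall>u\<in>Us. \<forall>t\<in>T. norm x < r \<and> nU u < r \<longrightarrow>
        norm (outp \<phi> h t x u) \<le> \<sigma> (norm x) + \<gamma> (nU u)))"

definition OUGS where
  "OUGS T Us nU \<phi> h \<longleftrightarrow> (\<exists>\<sigma> \<gamma>. class_Kinf \<sigma> \<and> class_Kinf \<gamma> \<and>
     (\<forall>x. \<forall>u\<in>Us. \<forall>t\<in>T. norm (outp \<phi> h t x u) \<le> \<sigma> (norm x) + \<gamma> (nU u)))"

definition OUAG where
  "OUAG T Us nU \<phi> h \<longleftrightarrow> (\<exists>\<gamma>. class_Kinf \<gamma> \<and>
     (\<forall>\<epsilon>>0. \<forall>r>0. \<forall>s>0. \<exists>\<tau>\<in>T. \<forall>x. \<forall>u\<in>Us. \<forall>t\<in>T.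
        norm x < r \<and> nU u < s \<and> t \<ge> \<tau> \<longrightarrow> norm (outp \<phi> h t x u) \<le> \<epsilon> + \<gamma> (nU u)))"

definition OCAG where
  "OCAG T Us nU \<phi> h \<longleftrightarrow> (\<exists>\<beta> \<gamma> c. class_KL \<beta> \<and> class_Kinf \<gamma> \<and> c \<ge> 0 \<and>
     (\<forall>x. \<forall>u\<in>Us. \<forall>t\<in>T. norm (outp \<phi> h t x u) \<le> \<beta> (norm x + c) t + \<gamma> (nU u)))"

end

theory Submission
  imports Defs "HOL-Real_Asymp.Real_Asymp"
begin


lemma K_nonneg: assumes "class_K g" "0 \<le> r" shows "0 \<le> g r"
proof (cases "r = 0")
  case True then show ?thesis using assms by (simp add: class_K_def)
next
  case False
  then have "g 0 < g r" using assms unfolding class_K_def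
    by (intro strict_mono_onD[of "{0..}" g]) auto
  then show ?thesis using assms by (simp add: class_K_def)
qed

lemma K_mono: assumes "class_K g" "0 \<le> a" "a \<le> b" shows "g a \<le> g b"
proof (cases "a = b")
  case False
  then have "g a < g b" using assms unfolding class_K_def
    by (intro strict_mono_onD[of "{0..}" g]) auto
  then show ?thesis by simp
qed simp

lemma K_small: assumes "class_K g" "\<epsilon> > 0" shows "\<exists>\<delta>>0. g \<delta> \<le> \<epsilon>"
proof -
  have c: "continuous_on {0..} g" and z: "g 0 = 0" using assms by (auto simp: class_K_def)
  obtain d where d: "d > 0" "\<forall>x'\<in>{0..}. dist x' 0 < d \<longrightarrow> dist (g x') (g 0) < \<epsilon>"
    using c assms(2) unfolding continuous_on_iff by (meson atLeast_iff order_refl)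
  have "dist (g (d/2)) (g 0) < \<epsilon>" using d by auto
  then have "g (d/2) \<le> \<epsilon>" using z by (simp add: dist_real_def)
  then show ?thesis using d by (intro exI[of _ "d/2"]) auto
qed

lemma K_add: assumes "class_K f" "class_K g" shows "class_K (\<lambda>r. f r + g r)"
  using assms unfolding class_K_def strict_mono_on_def
  by (auto intro: continuous_on_add add_strict_mono)

lemma Kinf_add: assumes "class_Kinf f" "class_K g" shows "class_Kinf (\<lambda>r. f r + g r)"
proof -
  have "class_K (\<lambda>r. f r + g r)" using assms K_add class_Kinf_def by blast
  moreover have "\<exists>r\<ge>0. f r + g r > M" for M
  proof -
    obtain r where "r \<ge> 0" "f r > M" using assms unfolding class_Kinf_def by blast
    then show ?thesis using K_nonneg[OF assms(2), of r] by (intro exI[of _ r]) auto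
  qed
  ultimately show ?thesis unfolding class_Kinf_def by blast
qed

lemma Kinf_K: "class_Kinf f \<Longrightarrow> class_K f" by (simp add: class_Kinf_def)

lemma K_id: "class_K (\<lambda>r. r)"
  unfolding class_K_def strict_mono_on_def by (auto intro: continuous_intros)

lemma Kinf_id: "class_Kinf (\<lambda>r. r)"
  unfolding class_Kinf_def using K_id
proof (intro conjI allI)
  fix M :: real show "\<exists>r\<ge>0. M < r" by (intro exI[of _ "max 0 M + 1"]) auto
qed

lemma T_nonneg: assumes "T = \<nat> \<or> T = {0..}" "t \<in> T" shows "0 \<le> (t::real)"
  using assms by (auto elim: Nats_cases)

lemma T_large: assumes "T = \<nat> \<or> T = {0..}" shows "\<exists>\<tau>\<in>T. (a::real) \<le> \<tau>"
  using assms
proof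
  assume "T = \<nat>"
  then show ?thesis by (intro bexI[of _ "of_nat (nat \<lceil>a\<rceil>)"]) (auto simp: real_nat_ceiling_ge)
next
  assume "T = {0..}"
  then show ?thesis by (intro bexI[of _ "max 0 a"]) auto
qed

lemma KL_zero: "class_KL \<beta> \<Longrightarrow> 0 \<le> t \<Longrightarrow> \<beta> 0 t = 0"
  by (simp add: class_KL_def class_K_def)

lemma KL_nonneg: "class_KL \<beta> \<Longrightarrow> 0 \<le> r \<Longrightarrow> 0 \<le> t \<Longrightarrow> 0 \<le> \<beta> r t"
  using K_nonneg[of "\<lambda>r. \<beta> r t" r] by (simp add: class_KL_def)

lemma KL_mono1: "class_KL \<beta> \<Longrightarrow> 0 \<le> r \<Longrightarrow> r \<le> r' \<Longrightarrow> 0 \<le> t \<Longrightarrow> \<beta> r t \<le> \<beta> r' t"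
  using K_mono[of "\<lambda>r. \<beta> r t" r r'] by (simp add: class_KL_def)

lemma KL_anti: assumes "class_KL \<beta>" "0 \<le> r" "0 \<le> t" "t \<le> t'" shows "\<beta> r t' \<le> \<beta> r t"
proof (cases "r = 0")
  case True then show ?thesis using assms KL_zero[of \<beta> t] KL_zero[of \<beta> t'] by simp
next
  case False
  then have "antimono_on {0..} (\<lambda>t. \<beta> r t)" using assms by (simp add: class_KL_def class_L_def)
  then show ?thesis using assms unfolding monotone_on_def by auto
qed

lemma KL_small: assumes "class_KL \<beta>" "r > 0" "\<epsilon> > 0" shows "\<exists>\<tau>0. \<forall>t\<ge>\<tau>0. \<beta> r t \<le> \<epsilon>"
proof -
  have "((\<lambda>t. \<beta> r t) \<longlongrightarrow> 0) at_top" using assms by (simp add: class_KL_def class_L_def)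
  then have "eventually (\<lambda>t. dist (\<beta> r t) 0 < \<epsilon>) at_top" using assms(3) tendstoD by blast
  then obtain N where "\<forall>t\<ge>N. dist (\<beta> r t) 0 < \<epsilon>" by (auto simp: eventually_at_top_linorder)
  then show ?thesis by (intro exI[of _ N]) (auto simp: dist_real_def)
qed



definition S0 :: "('i \<Rightarrow> real) \<Rightarrow> 'i set \<Rightarrow> real" where
  "S0 f I = Sup (insert 0 (f ` I))"

lemma S0_bdd: "\<forall>i\<in>I. f i \<le> (B::real) \<Longrightarrow> bdd_above (insert 0 (f ` I))"
  by (rule bdd_aboveI[of _ "max 0 B"]) auto

lemma S0_upper: assumes "\<forall>i\<in>I. f i \<le> B" "i \<in> I" shows "f i \<le> S0 f I"
  unfolding S0_def using assms by (intro cSup_upper S0_bdd) auto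

lemma S0_nonneg: assumes "\<forall>i\<in>I. f i \<le> B" shows "0 \<le> S0 f I"
  unfolding S0_def using assms by (intro cSup_upper S0_bdd) auto

lemma S0_le: assumes "\<forall>i\<in>I. f i \<le> B" "0 \<le> B" shows "S0 f I \<le> B"
  unfolding S0_def using assms by (intro cSup_least) auto

lemma S0_cmp: assumes "\<forall>i\<in>I. g i \<le> B" "\<forall>i\<in>I. f i \<le> g i + D" "0 \<le> D"
  shows "S0 f I \<le> S0 g I + D"
  unfolding S0_def
proof (intro cSup_least)
  fix x assume "x \<in> insert 0 (f ` I)"
  then show "x \<le> Sup (insert 0 (g ` I)) + D"
  proof
    assume "x = 0" then show ?thesis using S0_nonneg[OF assms(1)] assms(3) by (simp add: S0_def)
  next
    assume "x \<in> f ` I"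
    then obtain i where "i \<in> I" "x = f i" by auto
    then show ?thesis using S0_upper[OF assms(1), of i] assms(2) by (force simp: S0_def)
  qed
qed auto

lemma cont_from_mod:
  fixes f g :: "real \<Rightarrow> real"
  assumes "continuous_on S g" "\<forall>a\<in>S. \<forall>b\<in>S. \<bar>f a - f b\<bar> \<le> c * \<bar>g a - g b\<bar>" "0 \<le> c"
  shows "continuous_on S f"
  unfolding continuous_on_iff
proof (intro ballI allI impI)
  fix x e assume x: "x \<in> S" and e: "(0::real) < e"
  have "e / (c + 1) > 0" using e assms(3) by simp
  then obtain d where d: "d > 0" "\<forall>x'\<in>S. dist x' x < d \<longrightarrow> dist (g x') (g x) < e / (c+1)"
    using assms(1) x unfolding continuous_on_iff by blast
  show "\<exists>d>0. \<forall>x'\<in>S. dist x' x < d \<longrightarrow> dist (f x') (f x) < e"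
  proof (intro exI[of _ d] conjI ballI impI)
    fix x' assume "x' \<in> S" "dist x' x < d"
    then have 1: "\<bar>g x' - g x\<bar> < e / (c+1)" using d by (auto simp: dist_real_def)
    have "\<bar>f x' - f x\<bar> \<le> c * \<bar>g x' - g x\<bar>" using assms(2) x \<open>x' \<in> S\<close> by blast
    also have "\<dots> \<le> c * (e / (c+1))" using 1 assms(3) by (intro mult_left_mono) auto
    also have "\<dots> < e" using e assms(3) by (simp add: field_simps)
    finally show "dist (f x') (f x) < e" by (simp add: dist_real_def)
  qed (use d in auto)
qed



lemma KL_major:
  fixes a nx st :: "'i \<Rightarrow> real" and \<sigma> :: "real \<Rightarrow> real"
  assumes \<sigma>: "class_Kinf \<sigma>"
   and nx: "\<forall>i\<in>I. 0 \<le> nx i" and st: "\<forall>i\<in>I. 0 \<le> st i"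
   and a0: "\<forall>i\<in>I. 0 \<le> a i" and a\<sigma>: "\<forall>i\<in>I. a i \<le> \<sigma> (nx i)"
   and att: "\<forall>\<epsilon>>0. \<forall>R>0. \<exists>\<tau>. \<forall>i\<in>I. nx i < R \<and> \<tau> \<le> st i \<longrightarrow> a i \<le> \<epsilon>"
  shows "\<exists>\<beta>. class_KL \<beta> \<and> (\<forall>i\<in>I. a i \<le> \<beta> (nx i) (st i))"
proof -
  have \<sigma>K: "class_K \<sigma>" using \<sigma> by (rule Kinf_K)
  define F where "F r t i = a i - 2 * max 0 (\<sigma> (nx i) - \<sigma> r) - max 0 (t - st i)" for r t i
  define \<psi> where "\<psi> r t = S0 (F r t) I" for r t
  define \<beta> where "\<beta> r t = \<psi> r t + r / (1 + t)" for r t :: real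
  have Fbd0: "a i - 2 * max 0 (\<sigma> (nx i) - \<sigma> r) \<le> \<sigma> r" if "i \<in> I" for i r
    using a\<sigma> that by (auto simp: max_def)
  have Fbd: "\<forall>i\<in>I. F r t i \<le> \<sigma> r" for r t
  proof
    fix i assume "i \<in> I"
    from Fbd0[OF this, of r] show "F r t i \<le> \<sigma> r" unfolding F_def by (smt (verit) max.cobounded1)
  qed
  have \<psi>0: "0 \<le> \<psi> r t" for r t unfolding \<psi>_def using Fbd by (rule S0_nonneg)
  have \<psi>le: "\<psi> r t \<le> \<sigma> r" if "0 \<le> r" for r t
    unfolding \<psi>_def using Fbd K_nonneg[OF \<sigma>K that] by (rule S0_le)
  have \<psi>low: "a i \<le> \<psi> (nx i) (st i)" if "i \<in> I" for i
  proof -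
    have "F (nx i) (st i) i \<le> \<psi> (nx i) (st i)" unfolding \<psi>_def by (rule S0_upper[OF Fbd that])
    then show ?thesis by (simp add: F_def)
  qed
  have \<psi>rmod: "\<psi> r t \<le> \<psi> r' t + 2 * \<bar>\<sigma> r - \<sigma> r'\<bar>" for r r' t
    unfolding \<psi>_def by (rule S0_cmp[OF Fbd]) (auto simp: F_def max_def abs_if)
  have \<psi>rmono: "\<psi> r t \<le> \<psi> r' t" if "0 \<le> r" "r \<le> r'" for r r' t
  proof -
    have "\<sigma> r \<le> \<sigma> r'" using K_mono[OF \<sigma>K that] .
    then have "\<psi> r t \<le> \<psi> r' t + 0" unfolding \<psi>_def by (intro S0_cmp[OF Fbd]) (auto simp: F_def max_def)
    then show ?thesis by simp
  qed
  have \<psi>tmod: "\<psi> r t \<le> \<psi> r t' + \<bar>t - t'\<bar>" for r t t'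
    unfolding \<psi>_def by (rule S0_cmp[OF Fbd]) (auto simp: F_def max_def abs_if)
  have \<psi>tanti: "\<psi> r t' \<le> \<psi> r t" if "t \<le> t'" for r t t'
  proof -
    have "\<psi> r t' \<le> \<psi> r t + 0" unfolding \<psi>_def using that
      by (intro S0_cmp[OF Fbd]) (auto simp: F_def max_def)
    then show ?thesis by simp
  qed
  have \<psi>lim: "\<exists>N. \<forall>t\<ge>N. \<psi> r t \<le> \<epsilon>" if r: "0 \<le> r" and e: "\<epsilon> > 0" for r \<epsilon>
  proof -
    obtain R where R0: "R \<ge> 0" and R: "\<sigma> R > 2 * \<sigma> r" using \<sigma> unfolding class_Kinf_def by blast
    have "R \<noteq> 0" using R K_nonneg[OF \<sigma>K r] \<sigma>K by (auto simp: class_K_def)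
    then have "R > 0" using R0 by simp
    then obtain \<tau> where \<tau>: "\<forall>i\<in>I. nx i < R \<and> \<tau> \<le> st i \<longrightarrow> a i \<le> \<epsilon>" using att e by blast
    show ?thesis
    proof (intro exI[of _ "\<tau> + \<sigma> r"] allI impI)
      fix t assume t: "\<tau> + \<sigma> r \<le> t"
      show "\<psi> r t \<le> \<epsilon>" unfolding \<psi>_def
      proof (rule S0_le[OF ballI])
        fix i assume i: "i \<in> I"
        show "F r t i \<le> \<epsilon>"
        proof (cases "t - st i \<ge> \<sigma> r")
          case True then show ?thesis using Fbd0[OF i, of r] e by (simp add: F_def max_def)
        next
          case False
          then have st: "\<tau> \<le> st i" using t by simp
          show ?thesis
          proof (cases "nx i < R")
            case True
            then have "a i \<le> \<epsilon>" using \<tau> st i by blast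
            then show ?thesis by (simp add: F_def max_def)
          next
            case False
            then have "\<sigma> R \<le> \<sigma> (nx i)" using K_mono[OF \<sigma>K R0] by simp
            moreover have "a i \<le> \<sigma> (nx i)" using a\<sigma> i by blast
            ultimately show ?thesis using R e K_nonneg[OF \<sigma>K r] by (simp add: F_def max_def)
          qed
        qed
      qed (use e in simp)
    qed
  qed
  have KL: "class_KL \<beta>"
    unfolding class_KL_def
  proof (intro conjI allI impI)
    fix t :: real assume t: "0 \<le> t"
    have c1: "continuous_on {0..} (\<lambda>r. \<psi> r t)"
    proof (rule cont_from_mod[where g=\<sigma> and c=2])
      show "continuous_on {0..} \<sigma>" using \<sigma>K by (simp add: class_K_def)
      show "\<forall>a\<in>{0..}. \<forall>b\<in>{0..}. \<bar>\<psi> a t - \<psi> b t\<bar> \<le> 2 * \<bar>\<sigma> a - \<sigma> b\<bar>"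
        using \<psi>rmod[of _ t] by (smt (verit, best) abs_minus_commute)
    qed simp
    show "class_K (\<lambda>r. \<beta> r t)"
      unfolding class_K_def
    proof (intro conjI)
      show "continuous_on {0..} (\<lambda>r. \<beta> r t)" unfolding \<beta>_def using t
        by (intro continuous_on_add c1 continuous_intros) auto
      show "strict_mono_on {0..} (\<lambda>r. \<beta> r t)"
      proof (rule strict_mono_onI)
        fix r s :: real assume "r \<in> {0..}" "s \<in> {0..}" "r < s"
        then have "\<psi> r t \<le> \<psi> s t" "r / (1 + t) < s / (1 + t)" using \<psi>rmono t
          by (auto intro: divide_strict_right_mono)
        then show "\<beta> r t < \<beta> s t" by (simp add: \<beta>_def)
      qed
      show "\<beta> 0 t = 0" using \<psi>le[of 0 t] \<psi>0[of 0 t] \<sigma>K by (simp add: \<beta>_def class_K_def)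
    qed
  next
    fix r :: real assume r: "0 < r"
    have c1: "continuous_on {0..} (\<lambda>t. \<psi> r t)"
    proof (rule cont_from_mod[where g="\<lambda>t. t" and c=1])
      show "\<forall>a\<in>{0..}. \<forall>b\<in>{0..}. \<bar>\<psi> r a - \<psi> r b\<bar> \<le> 1 * \<bar>a - b\<bar>"
        using \<psi>tmod[of r] by (smt (verit, best) abs_minus_commute)
    qed (auto intro: continuous_intros)
    show "class_L (\<lambda>t. \<beta> r t)"
      unfolding class_L_def
    proof (intro conjI)
      show "continuous_on {0..} (\<lambda>t. \<beta> r t)" unfolding \<beta>_def
        by (intro continuous_on_add c1 continuous_intros) auto
      show "antimono_on {0..} (\<lambda>t. \<beta> r t)"
        unfolding monotone_on_def
      proof (intro ballI impI)
        fix t s :: real assume "t \<in> {0..}" "s \<in> {0..}" "t \<le> s"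
        then have "\<psi> r s \<le> \<psi> r t" "r / (1 + s) \<le> r / (1 + t)" using \<psi>tanti r
          by (auto intro!: divide_left_mono)
        then show "\<beta> r s \<le> \<beta> r t" by (simp add: \<beta>_def)
      qed
      have l1: "((\<lambda>t. \<psi> r t) \<longlongrightarrow> 0) at_top"
      proof (rule tendstoI)
        fix e :: real assume e: "e > 0"
        obtain N where "\<forall>t\<ge>N. \<psi> r t \<le> e/2" using \<psi>lim[of r "e/2"] r e by auto
        then show "eventually (\<lambda>t. dist (\<psi> r t) 0 < e) at_top"
          unfolding eventually_at_top_linorder using \<psi>0 e
          by (intro exI[of _ N]) (auto simp: dist_real_def)
      qed
      have l2: "((\<lambda>t. r / (1 + t)) \<longlongrightarrow> 0) at_top" by real_asymp
      show "((\<lambda>t. \<beta> r t) \<longlongrightarrow> 0) at_top" unfolding \<beta>_def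
        using tendsto_add[OF l1 l2] by simp
    qed
  qed
  have "a i \<le> \<beta> (nx i) (st i)" if "i \<in> I" for i
  proof -
    have "0 \<le> nx i / (1 + st i)" using nx st that by simp
    then show ?thesis using \<psi>low[OF that] by (simp add: \<beta>_def)
  qed
  then show ?thesis using KL by blast
qed



lemma kinv_le: fixes v w :: real assumes "0 \<le> v" "w < 1" "v / (1 + v) \<le> w" shows "v \<le> w / (1 - w)"
proof -
  have "v \<le> w * (1 + v)" using assms by (simp add: field_simps)
  then have "v * (1 - w) \<le> w" by (simp add: algebra_simps)
  then show ?thesis using assms by (simp add: field_simps)
qed

lemma kinv_mono: fixes w w' :: real assumes "w \<le> w'" "w' < 1" shows "w / (1 - w) \<le> w' / (1 - w')"
  using assms by (simp add: field_simps)

lemma kappa_mono: fixes v w :: real assumes "0 \<le> v" "v \<le> w" shows "v / (1 + v) \<le> w / (1 + w)"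
  using assms by (simp add: field_simps)

lemma kappa_inv: fixes M :: real assumes "0 \<le> M" shows "(M / (1 + M)) / (1 - M / (1 + M)) = M"
  using assms by (simp add: field_simps)

lemma kappa_lt1: fixes M :: real assumes "0 \<le> M" shows "M / (1 + M) < 1"
  using assms by (simp add: field_simps)

lemma Kinf_major:
  fixes m v :: "'i \<Rightarrow> real"
  assumes m0: "\<forall>i\<in>I. 0 \<le> m i" and v0: "\<forall>i\<in>I. 0 \<le> v i"
   and loc: "\<forall>\<epsilon>>0. \<exists>\<delta>>0. \<forall>i\<in>I. m i < \<delta> \<longrightarrow> v i \<le> \<epsilon>"
   and bnd: "\<forall>R>0. \<exists>M. \<forall>i\<in>I. m i < R \<longrightarrow> v i \<le> M"
  shows "\<exists>\<alpha>. class_Kinf \<alpha> \<and> (\<forall>i\<in>I. v i \<le> \<alpha> (m i))"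
proof -
  define \<kappa> where "\<kappa> w = w / (1 + w)" for w :: real
  define F where "F r i = \<kappa> (v i) - max 0 (ln (m i) - ln r)" for r i
  define A where "A r = S0 (F r) I" for r
  define f where "f r = A r / (1 - A r) + r" for r
  define \<alpha> where "\<alpha> r = (if r \<le> 0 then 0 else f r)" for r
  have zero: "v i = 0" if i: "i \<in> I" and mi: "m i = 0" for i
  proof (rule ccontr)
    assume "v i \<noteq> 0"
    moreover have "0 \<le> v i" using v0 i by blast
    ultimately have vp: "v i > 0" by linarith
    then have "v i / 2 > 0" by simp
    then have "\<exists>\<delta>>0. \<forall>j\<in>I. m j < \<delta> \<longrightarrow> v j \<le> v i / 2" by (rule loc[rule_format])
    then obtain \<delta> where d1: "\<delta> > 0" and d: "\<forall>j\<in>I. m j < \<delta> \<longrightarrow> v j \<le> v i / 2"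
      by (elim exE conjE)
    have "m i < \<delta>" using mi d1 by simp
    then have "v i \<le> v i / 2" using d i by blast
    then show False using vp by simp
  qed
  have \<kappa>1: "\<kappa> (v i) \<le> 1" if "i \<in> I" for i
  proof -
    have "0 \<le> v i" using v0 that by blast
    then show ?thesis by (simp add: \<kappa>_def field_simps)
  qed
  have \<kappa>0: "0 \<le> \<kappa> (v i)" if "i \<in> I" for i using v0 that by (simp add: \<kappa>_def)
  have Fbd: "\<forall>i\<in>I. F r i \<le> 1" for r
    using \<kappa>1 by (smt (verit) F_def max.cobounded1)
  have A0: "0 \<le> A r" for r unfolding A_def using Fbd by (rule S0_nonneg)
  have Aup: "A r \<le> \<kappa> M" if r: "r > 0" and M: "0 \<le> M" and hM: "\<forall>i\<in>I. m i < exp 1 * r \<longrightarrow> v i \<le> M" for r M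
    unfolding A_def
  proof (rule S0_le[OF ballI])
    fix i assume i: "i \<in> I"
    show "F r i \<le> \<kappa> M"
    proof (cases "m i = 0")
      case True
      have "F r i \<le> 0" using zero[OF i True] by (simp add: F_def \<kappa>_def)
      moreover have "0 \<le> \<kappa> M" using M by (simp add: \<kappa>_def)
      ultimately show ?thesis by linarith
    next
      case False
      then have mpos: "m i > 0" using m0 i by force
      show ?thesis
      proof (cases "m i < exp 1 * r")
        case True
        then have "\<kappa> (v i) \<le> \<kappa> M" using hM i v0 unfolding \<kappa>_def by (intro kappa_mono) auto
        then show ?thesis by (simp add: F_def)
      next
        case False
        then have "ln (exp 1 * r) \<le> ln (m i)" using r mpos by simp
        then have "1 + ln r \<le> ln (m i)" using r by (simp add: ln_mult)
        then have "F r i \<le> 0" using \<kappa>1[OF i] by (simp add: F_def)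
        moreover have "0 \<le> \<kappa> M" using M by (simp add: \<kappa>_def)
        ultimately show ?thesis by linarith
      qed
    qed
  qed (use M in \<open>simp add: \<kappa>_def\<close>)
  have Alt1: "A r < 1" if r: "r > 0" for r
  proof -
    have "exp 1 * r > 0" using r by simp
    then have "\<exists>M. \<forall>i\<in>I. m i < exp 1 * r \<longrightarrow> v i \<le> M" by (rule bnd[rule_format])
    then obtain M where "\<forall>i\<in>I. m i < exp 1 * r \<longrightarrow> v i \<le> M" by (elim exE)
    then have "\<forall>i\<in>I. m i < exp 1 * r \<longrightarrow> v i \<le> max 0 M" by force
    then have "A r \<le> \<kappa> (max 0 M)" using Aup r by simp
    moreover have "max 0 M / (1 + max 0 M) < 1" by (rule kappa_lt1) simp
    ultimately show ?thesis unfolding \<kappa>_def by linarith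
  qed
  have Alow: "\<kappa> (v i) \<le> A r" if r: "r > 0" and i: "i \<in> I" and mr: "m i \<le> r" for r i
  proof (cases "m i = 0")
    case True then show ?thesis using zero[OF i] A0 by (simp add: \<kappa>_def)
  next
    case False
    then have "m i > 0" using m0 i by force
    then have "ln (m i) \<le> ln r" using mr by simp
    then have "F r i = \<kappa> (v i)" by (simp add: F_def)
    moreover have "F r i \<le> A r" unfolding A_def by (rule S0_upper[OF Fbd i])
    ultimately show ?thesis by simp
  qed
  have Amod: "A r \<le> A r' + \<bar>ln r - ln r'\<bar>" for r r'
    unfolding A_def by (rule S0_cmp[OF Fbd]) (auto simp: F_def max_def abs_if)
  have Amono: "A r \<le> A r'" if "0 < r" "r \<le> r'" for r r'
  proof -
    have "ln r \<le> ln r'" using that by simp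
    then have "A r \<le> A r' + 0" unfolding A_def by (intro S0_cmp[OF Fbd]) (auto simp: F_def max_def)
    then show ?thesis by simp
  qed
  have Acont: "continuous_on {0<..} A"
  proof (rule cont_from_mod[where g=ln and c=1])
    show "continuous_on {0<..} (ln::real\<Rightarrow>real)" using continuous_on_ln[of "{0<..}" "\<lambda>x::real. x"] by (simp add: continuous_on_id)
    show "\<forall>a\<in>{0<..}. \<forall>b\<in>{0<..}. \<bar>A a - A b\<bar> \<le> 1 * \<bar>ln a - ln b\<bar>"
      using Amod by (smt (verit, best) abs_minus_commute)
  qed simp
  have fcont: "continuous_on {0<..} f"
    unfolding f_def using Alt1
    by (intro continuous_on_add continuous_on_divide Acont continuous_intros) (auto, metis less_irrefl)
  have fge: "f r \<ge> r" if "r > 0" for r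
    using A0[of r] Alt1[OF that] by (simp add: f_def)
  have \<alpha>cont: "continuous_on {0..} \<alpha>"
    unfolding continuous_on_iff
  proof (intro ballI allI impI)
    fix x e :: real assume x: "x \<in> {0..}" and e: "0 < e"
    show "\<exists>d>0. \<forall>x'\<in>{0..}. dist x' x < d \<longrightarrow> dist (\<alpha> x') (\<alpha> x) < e"
    proof (cases "x = 0")
      case True
      have "e/2 > 0" using e by simp
      then have "\<exists>\<delta>>0. \<forall>i\<in>I. m i < \<delta> \<longrightarrow> v i \<le> e/2" by (rule loc[rule_format])
      then obtain \<delta> where \<delta>: "\<delta> > 0" "\<forall>i\<in>I. m i < \<delta> \<longrightarrow> v i \<le> e/2" by (elim exE conjE)
      show ?thesis
      proof (intro exI[of _ "min (\<delta>/3) (e/2)"] conjI ballI impI)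
        fix x' assume x': "x' \<in> {0..}" "dist x' x < min (\<delta>/3) (e/2)"
        show "dist (\<alpha> x') (\<alpha> x) < e"
        proof (cases "x' = 0")
          case False
          then have x'p: "x' > 0" using x' by simp
          have "exp 1 * x' \<le> 3 * x'" using exp_le x'p by (intro mult_right_mono) auto
          also have "\<dots> < \<delta>" using x' True by (auto simp: dist_real_def)
          finally have "\<forall>i\<in>I. m i < exp 1 * x' \<longrightarrow> v i \<le> e/2" using \<delta> by auto
          then have "A x' \<le> \<kappa> (e/2)" using Aup[OF x'p] e by simp
          moreover have "\<kappa> (e/2) < 1" unfolding \<kappa>_def by (rule kappa_lt1) (use e in simp)
          ultimately have "A x' / (1 - A x') \<le> \<kappa> (e/2) / (1 - \<kappa> (e/2))" by (rule kinv_mono)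
          moreover have "\<kappa> (e/2) / (1 - \<kappa> (e/2)) = e/2" unfolding \<kappa>_def by (rule kappa_inv) (use e in simp)
          ultimately have "A x' / (1 - A x') \<le> e/2" by simp
          moreover have "x' < e/2" using x' True by (auto simp: dist_real_def)
          moreover have "0 \<le> A x' / (1 - A x')" using A0[of x'] Alt1[OF x'p] by simp
          ultimately have "A x' / (1 - A x') + x' < e \<and> 0 \<le> A x' / (1 - A x') + x'" using x'p by linarith
          then have "\<bar>A x' / (1 - A x') + x'\<bar> < e" by (simp only: abs_if) auto
          then show ?thesis using True x'p by (simp add: \<alpha>_def f_def dist_real_def)
        qed (use True e in \<open>simp add: \<alpha>_def\<close>)
      qed (use \<delta> e in auto)
    next
      case False
      then have xp: "x > 0" using x by simp
      obtain d where d: "d > 0" "\<forall>x'\<in>{0<..}. dist x' x < d \<longrightarrow> dist (f x') (f x) < e"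
        using fcont xp e unfolding continuous_on_iff by (meson greaterThan_iff)
      show ?thesis
      proof (intro exI[of _ "min d x"] conjI ballI impI)
        fix x' assume x': "x' \<in> {0..}" "dist x' x < min d x"
        then have "x' > 0" by (auto simp: dist_real_def)
        then show "dist (\<alpha> x') (\<alpha> x) < e" using d x' xp by (auto simp: \<alpha>_def)
      qed (use d xp in auto)
    qed
  qed
  have \<alpha>K: "class_Kinf \<alpha>"
    unfolding class_Kinf_def class_K_def
  proof (intro conjI allI)
    show "continuous_on {0..} \<alpha>" by (rule \<alpha>cont)
    show "\<alpha> 0 = 0" by (simp add: \<alpha>_def)
    show "strict_mono_on {0..} \<alpha>"
    proof (rule strict_mono_onI)
      fix r s :: real assume rs: "r \<in> {0..}" "s \<in> {0..}" "r < s"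
      show "\<alpha> r < \<alpha> s"
      proof (cases "r = 0")
        case True then show ?thesis using fge[of s] rs by (simp add: \<alpha>_def)
      next
        case False
        then have rp: "r > 0" using rs by simp
        have "A r / (1 - A r) \<le> A s / (1 - A s)"
          using kinv_mono Amono[OF rp] Alt1[of s] rs rp by simp
        then show ?thesis using rs rp by (simp add: \<alpha>_def f_def)
      qed
    qed
    fix M :: real
    show "\<exists>r\<ge>0. M < \<alpha> r"
    proof (intro exI[of _ "max 0 M + 1"] conjI)
      have p: "0 < max 0 M + 1" by simp
      have "max 0 M + 1 \<le> f (max 0 M + 1)" by (rule fge[OF p])
      moreover have "\<alpha> (max 0 M + 1) = f (max 0 M + 1)" using p by (simp add: \<alpha>_def)
      ultimately show "M < \<alpha> (max 0 M + 1)" by linarith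
    qed simp
  qed
  have "v i \<le> \<alpha> (m i)" if i: "i \<in> I" for i
  proof (cases "m i = 0")
    case True then show ?thesis using zero[OF i] by (simp add: \<alpha>_def)
  next
    case False
    then have mp: "m i > 0" using m0 i by force
    have "\<kappa> (v i) \<le> A (m i)" using Alow[OF mp i] by simp
    then have "v i \<le> A (m i) / (1 - A (m i))"
      using kinv_le[of "v i" "A (m i)"] v0 i Alt1[OF mp] by (simp add: \<kappa>_def)
    then show ?thesis using mp by (simp add: \<alpha>_def f_def)
  qed
  then show ?thesis using \<alpha>K by blast
qed



locale sysT =
  fixes T :: "real set" and Us :: "(real \<Rightarrow> 'u::real_vector) set" and nU :: "(real \<Rightarrow> 'u) \<Rightarrow> real"
    and \<phi> :: "real \<Rightarrow> 'x::real_normed_vector \<Rightarrow> (real \<Rightarrow> 'u) \<Rightarrow> 'x"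
    and h :: "'x \<Rightarrow> 'u \<Rightarrow> 'y::real_normed_vector"
  assumes hT: "T = \<nat> \<or> T = {0..}" and hnU: "\<And>u. u \<in> Us \<Longrightarrow> 0 \<le> nU u"
begin

abbreviation y where "y t x u \<equiv> outp \<phi> h t x u"

lemma tnn: "t \<in> T \<Longrightarrow> 0 \<le> t" using T_nonneg[OF hT] .

lemma IOS_OUGS: assumes "IOS T Us nU \<phi> h" shows "OUGS T Us nU \<phi> h"
proof -
  obtain \<beta> \<gamma> where b: "class_KL \<beta>" and g: "class_Kinf \<gamma>"
    and H: "\<forall>x. \<forall>u\<in>Us. \<forall>t\<in>T. norm (y t x u) \<le> \<beta> (norm x) t + \<gamma> (nU u)"
    using assms unfolding IOS_def by blast
  have K0: "class_K (\<lambda>r. \<beta> r 0)" using b by (simp add: class_KL_def)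
  have s: "class_Kinf (\<lambda>r. r + \<beta> r 0)" by (rule Kinf_add[OF Kinf_id K0])
  have "norm (y t x u) \<le> (norm x + \<beta> (norm x) 0) + \<gamma> (nU u)" if "u \<in> Us" "t \<in> T" for x u t
  proof -
    have "norm (y t x u) \<le> \<beta> (norm x) t + \<gamma> (nU u)" using H that by blast
    moreover have "\<beta> (norm x) t \<le> \<beta> (norm x) 0" using KL_anti[OF b, of "norm x" 0 t] tnn[OF that(2)] by simp
    ultimately show ?thesis using norm_ge_zero[of x] by linarith
  qed
  then show ?thesis unfolding OUGS_def using s g by blast
qed

lemma IOS_OUAG: assumes "IOS T Us nU \<phi> h" shows "OUAG T Us nU \<phi> h"
proof -
  obtain \<beta> \<gamma> where b: "class_KL \<beta>" and g: "class_Kinf \<gamma>"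
    and H: "\<forall>x. \<forall>u\<in>Us. \<forall>t\<in>T. norm (y t x u) \<le> \<beta> (norm x) t + \<gamma> (nU u)"
    using assms unfolding IOS_def by blast
  have "\<exists>\<tau>\<in>T. \<forall>x. \<forall>u\<in>Us. \<forall>t\<in>T. norm x < r \<and> nU u < s \<and> t \<ge> \<tau> \<longrightarrow> norm (y t x u) \<le> \<epsilon> + \<gamma> (nU u)"
    if e: "\<epsilon> > 0" and r: "r > 0" for \<epsilon> r s
  proof -
    obtain \<tau>0 where t0: "\<forall>t\<ge>\<tau>0. \<beta> r t \<le> \<epsilon>" using KL_small[OF b r e] by blast
    obtain \<tau> where \<tau>: "\<tau> \<in> T" "\<tau>0 \<le> \<tau>" using T_large[OF hT, of \<tau>0] by blast
    show ?thesis
    proof (intro bexI[OF _ \<tau>(1)] allI ballI impI)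
      fix x :: 'x and u t assume u: "u \<in> Us" and t: "t \<in> T" and c: "norm x < r \<and> nU u < s \<and> \<tau> \<le> t"
      have "norm (y t x u) \<le> \<beta> (norm x) t + \<gamma> (nU u)" using H u t by blast
      moreover have "\<beta> (norm x) t \<le> \<beta> r t" using KL_mono1[OF b, of "norm x" r t] c tnn[OF t] by simp
      moreover have "\<beta> r t \<le> \<epsilon>" using t0 c \<tau> by simp
      ultimately show "norm (y t x u) \<le> \<epsilon> + \<gamma> (nU u)" by simp
    qed
  qed
  then show ?thesis unfolding OUAG_def using g by blast
qed

lemma IOS_OCAG: assumes "IOS T Us nU \<phi> h" shows "OCAG T Us nU \<phi> h"
  using assms unfolding IOS_def OCAG_def by (metis add_0_right order_refl)

lemma OUGS_OULS: assumes "OUGS T Us nU \<phi> h" shows "OULS T Us nU \<phi> h"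
  using assms unfolding OUGS_def OULS_def by (metis zero_less_one)

lemma OUGS_BORS: assumes "OUGS T Us nU \<phi> h" shows "BORS T Us nU \<phi> h"
proof -
  obtain \<sigma> \<gamma> where s: "class_Kinf \<sigma>" and g: "class_Kinf \<gamma>"
    and H: "\<forall>x. \<forall>u\<in>Us. \<forall>t\<in>T. norm (y t x u) \<le> \<sigma> (norm x) + \<gamma> (nU u)"
    using assms unfolding OUGS_def by blast
  show ?thesis unfolding BORS_def
  proof (intro allI impI ballI)
    fix C :: real and \<tau> assume C: "C > 0"
    show "bdd_above {norm (y t x u) | t x u. norm x < C \<and> u \<in> Us \<and> nU u < C \<and> t \<in> T \<and> t < \<tau>}"
    proof (rule bdd_aboveI[of _ "\<sigma> C + \<gamma> C"])
      fix z assume "z \<in> {norm (y t x u) | t x u. norm x < C \<and> u \<in> Us \<and> nU u < C \<and> t \<in> T \<and> t < \<tau>}"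
      then obtain t and x :: 'x and u where z: "z = norm (y t x u)" and c: "norm x < C" "u \<in> Us" "nU u < C" "t \<in> T"
        by blast
      have "z \<le> \<sigma> (norm x) + \<gamma> (nU u)" using H c z by blast
      moreover have "\<sigma> (norm x) \<le> \<sigma> C" using K_mono[OF Kinf_K[OF s], of "norm x" C] c by simp
      moreover have "\<gamma> (nU u) \<le> \<gamma> C" using K_mono[OF Kinf_K[OF g], of "nU u" C] c hnU by simp
      ultimately show "z \<le> \<sigma> C + \<gamma> C" by simp
    qed
  qed
qed

lemma OULS_OCEP: assumes "OULS T Us nU \<phi> h" shows "OCEP T Us nU \<phi> h"
proof -
  obtain r \<sigma> \<gamma> where r: "r > 0" and s: "class_Kinf \<sigma>" and g: "class_Kinf \<gamma>"
    and H: "\<forall>x. \<forall>u\<in>Us. \<forall>t\<in>T. norm x < r \<and> nU u < r \<longrightarrow> norm (y t x u) \<le> \<sigma> (norm x) + \<gamma> (nU u)"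
    using assms unfolding OULS_def by blast
  have sK: "class_K (\<lambda>r. \<sigma> r + \<gamma> r)" using K_add[OF Kinf_K[OF s] Kinf_K[OF g]] .
  show ?thesis unfolding OCEP_def
  proof (intro ballI allI impI)
    fix \<tau> \<epsilon> :: real assume e: "\<epsilon> > 0"
    obtain \<delta>0 where d0: "\<delta>0 > 0" "\<sigma> \<delta>0 + \<gamma> \<delta>0 \<le> \<epsilon>" using K_small[OF sK e] by blast
    define \<delta> where "\<delta> = min \<delta>0 (r/2)"
    show "\<exists>\<delta>>0. \<forall>x. \<forall>u\<in>Us. \<forall>t\<in>T. t \<le> \<tau> \<and> norm x \<le> \<delta> \<and> nU u \<le> \<delta> \<longrightarrow> norm (y t x u) \<le> \<epsilon>"
    proof (intro exI[of _ \<delta>] conjI allI ballI impI)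
      show "\<delta> > 0" using d0 r by (simp add: \<delta>_def)
      fix x :: 'x and u t assume u: "u \<in> Us" and t: "t \<in> T" and c: "t \<le> \<tau> \<and> norm x \<le> \<delta> \<and> nU u \<le> \<delta>"
      have "norm x < r" "nU u < r" using c r by (auto simp: \<delta>_def)
      then have "norm (y t x u) \<le> \<sigma> (norm x) + \<gamma> (nU u)" using H u t by blast
      moreover have "\<sigma> (norm x) \<le> \<sigma> \<delta>0" using K_mono[OF Kinf_K[OF s], of "norm x" \<delta>0] c by (simp add: \<delta>_def)
      moreover have "\<gamma> (nU u) \<le> \<gamma> \<delta>0" using K_mono[OF Kinf_K[OF g], of "nU u" \<delta>0] c hnU[OF u] by (simp add: \<delta>_def)
      ultimately show "norm (y t x u) \<le> \<epsilon>" using d0 by simp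
    qed
  qed
qed

lemma OCAG_OUAG_BORS: assumes "OCAG T Us nU \<phi> h" shows "OUAG T Us nU \<phi> h" "BORS T Us nU \<phi> h"
proof -
  obtain \<beta> \<gamma> c where b: "class_KL \<beta>" and g: "class_Kinf \<gamma>" and c: "c \<ge> 0"
    and H: "\<forall>x. \<forall>u\<in>Us. \<forall>t\<in>T. norm (y t x u) \<le> \<beta> (norm x + c) t + \<gamma> (nU u)"
    using assms unfolding OCAG_def by blast
  have "\<exists>\<tau>\<in>T. \<forall>x. \<forall>u\<in>Us. \<forall>t\<in>T. norm x < r \<and> nU u < s \<and> t \<ge> \<tau> \<longrightarrow> norm (y t x u) \<le> \<epsilon> + \<gamma> (nU u)"
    if e: "\<epsilon> > 0" and r: "r > 0" for \<epsilon> r s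
  proof -
    have rc: "r + c > 0" using r c by simp
    obtain \<tau>0 where t0: "\<forall>t\<ge>\<tau>0. \<beta> (r + c) t \<le> \<epsilon>" using KL_small[OF b rc e] by blast
    obtain \<tau> where \<tau>: "\<tau> \<in> T" "\<tau>0 \<le> \<tau>" using T_large[OF hT, of \<tau>0] by blast
    show ?thesis
    proof (intro bexI[OF _ \<tau>(1)] allI ballI impI)
      fix x :: 'x and u t assume u: "u \<in> Us" and t: "t \<in> T" and cc: "norm x < r \<and> nU u < s \<and> \<tau> \<le> t"
      have "norm (y t x u) \<le> \<beta> (norm x + c) t + \<gamma> (nU u)" using H u t by blast
      moreover have "\<beta> (norm x + c) t \<le> \<beta> (r + c) t" using KL_mono1[OF b, of "norm x + c" "r + c" t] cc c tnn[OF t] by simp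
      moreover have "\<beta> (r + c) t \<le> \<epsilon>" using t0 cc \<tau> by simp
      ultimately show "norm (y t x u) \<le> \<epsilon> + \<gamma> (nU u)" by simp
    qed
  qed
  then show "OUAG T Us nU \<phi> h" unfolding OUAG_def using g by blast
  show "BORS T Us nU \<phi> h" unfolding BORS_def
  proof (intro allI impI ballI)
    fix C :: real and \<tau> assume C: "C > 0"
    show "bdd_above {norm (y t x u) | t x u. norm x < C \<and> u \<in> Us \<and> nU u < C \<and> t \<in> T \<and> t < \<tau>}"
    proof (rule bdd_aboveI[of _ "\<beta> (C + c) 0 + \<gamma> C"])
      fix z assume "z \<in> {norm (y t x u) | t x u. norm x < C \<and> u \<in> Us \<and> nU u < C \<and> t \<in> T \<and> t < \<tau>}"
      then obtain t and x :: 'x and u where z: "z = norm (y t x u)" and cc: "norm x < C" "u \<in> Us" "nU u < C" "t \<in> T"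
        by blast
      have "z \<le> \<beta> (norm x + c) t + \<gamma> (nU u)" using H cc z by blast
      moreover have "\<beta> (norm x + c) t \<le> \<beta> (C + c) t" using KL_mono1[OF b, of "norm x + c" "C + c" t] cc c tnn[OF cc(4)] by simp
      moreover have "\<beta> (C + c) t \<le> \<beta> (C + c) 0" using KL_anti[OF b, of "C + c" 0 t] C c tnn[OF cc(4)] by simp
      moreover have "\<gamma> (nU u) \<le> \<gamma> C" using K_mono[OF Kinf_K[OF g], of "nU u" C] cc hnU by simp
      ultimately show "z \<le> \<beta> (C + c) 0 + \<gamma> C" by simp
    qed
  qed
qed


lemma ball3: "(\<And>x u t. u \<in> Us \<Longrightarrow> t \<in> T \<Longrightarrow> P (x, u, t)) \<Longrightarrow> \<forall>i\<in>{(x, u, t). u \<in> Us \<and> t \<in> T}. P i"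
  by auto

lemma P2_OUGS: assumes A1: "OUAG T Us nU \<phi> h" and A2: "OCEP T Us nU \<phi> h" and A3: "BORS T Us nU \<phi> h"
  shows "OUGS T Us nU \<phi> h"
proof -
  obtain \<gamma> where g: "class_Kinf \<gamma>" and H: "\<forall>\<epsilon>>0. \<forall>r>0. \<forall>s>0. \<exists>\<tau>\<in>T. \<forall>x. \<forall>u\<in>Us. \<forall>t\<in>T.
        norm x < r \<and> nU u < s \<and> t \<ge> \<tau> \<longrightarrow> norm (y t x u) \<le> \<epsilon> + \<gamma> (nU u)"
    using A1 unfolding OUAG_def by blast
  have gK: "class_K \<gamma>" using g by (rule Kinf_K)
  have loc: "\<exists>\<delta>>0. \<forall>x u t. u \<in> Us \<longrightarrow> t \<in> T \<longrightarrow> max (norm x) (nU u) < \<delta> \<longrightarrow> norm (y t x u) \<le> \<epsilon>"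
    if e: "\<epsilon> > 0" for \<epsilon>
  proof -
    have e2: "\<epsilon>/2 > 0" using e by simp
    obtain \<delta>1 where d1: "\<delta>1 > 0" "\<gamma> \<delta>1 \<le> \<epsilon>/2" using K_small[OF gK e2] by blast
    have "\<exists>\<tau>\<in>T. \<forall>x. \<forall>u\<in>Us. \<forall>t\<in>T. norm x < 1 \<and> nU u < 1 \<and> t \<ge> \<tau> \<longrightarrow> norm (y t x u) \<le> \<epsilon>/2 + \<gamma> (nU u)"
      using H[rule_format, OF e2, of 1 1] by simp
    then obtain \<tau> where \<tau>: "\<tau> \<in> T" and H\<tau>: "\<forall>x. \<forall>u\<in>Us. \<forall>t\<in>T. norm x < 1 \<and> nU u < 1 \<and> t \<ge> \<tau> \<longrightarrow> norm (y t x u) \<le> \<epsilon>/2 + \<gamma> (nU u)"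
      by (elim bexE)
    have "\<exists>\<delta>>0. \<forall>x. \<forall>u\<in>Us. \<forall>t\<in>T. t \<le> \<tau> \<and> norm x \<le> \<delta> \<and> nU u \<le> \<delta> \<longrightarrow> norm (y t x u) \<le> \<epsilon>"
      using A2 \<tau> e unfolding OCEP_def by blast
    then obtain \<delta>2 where d2: "\<delta>2 > 0" and H2: "\<forall>x. \<forall>u\<in>Us. \<forall>t\<in>T. t \<le> \<tau> \<and> norm x \<le> \<delta>2 \<and> nU u \<le> \<delta>2 \<longrightarrow> norm (y t x u) \<le> \<epsilon>"
      by (elim exE conjE)
    show ?thesis
    proof (intro exI[of _ "min 1 (min \<delta>1 \<delta>2)"] conjI allI impI)
      show "0 < min 1 (min \<delta>1 \<delta>2)" using d1 d2 by simp
      fix x :: 'x and u t assume u: "u \<in> Us" and t: "t \<in> T" and c: "max (norm x) (nU u) < min 1 (min \<delta>1 \<delta>2)"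
      show "norm (y t x u) \<le> \<epsilon>"
      proof (cases "\<tau> \<le> t")
        case True
        have "norm (y t x u) \<le> \<epsilon>/2 + \<gamma> (nU u)" using H\<tau> u t c True by simp
        moreover have "\<gamma> (nU u) \<le> \<gamma> \<delta>1" using K_mono[OF gK hnU[OF u], of \<delta>1] c by simp
        ultimately show ?thesis using d1 by simp
      next
        case False
        then show ?thesis using H2 u t c by simp
      qed
    qed
  qed
  have bnd: "\<exists>M. \<forall>x u t. u \<in> Us \<longrightarrow> t \<in> T \<longrightarrow> max (norm x) (nU u) < R \<longrightarrow> norm (y t x u) \<le> M"
    if R: "R > 0" for R
  proof -
    have "\<exists>\<tau>\<in>T. \<forall>x. \<forall>u\<in>Us. \<forall>t\<in>T. norm x < R \<and> nU u < R \<and> t \<ge> \<tau> \<longrightarrow> norm (y t x u) \<le> 1 + \<gamma> (nU u)"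
      using H[rule_format, of 1 R R] R by simp
    then obtain \<tau> where \<tau>: "\<tau> \<in> T" and H\<tau>: "\<forall>x. \<forall>u\<in>Us. \<forall>t\<in>T. norm x < R \<and> nU u < R \<and> t \<ge> \<tau> \<longrightarrow> norm (y t x u) \<le> 1 + \<gamma> (nU u)"
      by (elim bexE)
    have "bdd_above {norm (y t (x::'x) u) | t x u. norm x < R \<and> u \<in> Us \<and> nU u < R \<and> t \<in> T \<and> t < \<tau>}"
      using A3[unfolded BORS_def, rule_format, OF R \<tau>] .
    then obtain M0 where M0: "\<forall>z\<in>{norm (y t (x::'x) u) | t x u. norm x < R \<and> u \<in> Us \<and> nU u < R \<and> t \<in> T \<and> t < \<tau>}. z \<le> M0"
      unfolding bdd_above_def by blast
    show ?thesis
    proof (intro exI[of _ "max M0 (1 + \<gamma> R)"] allI impI)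
      fix x :: 'x and u t assume u: "u \<in> Us" and t: "t \<in> T" and c: "max (norm x) (nU u) < R"
      show "norm (y t x u) \<le> max M0 (1 + \<gamma> R)"
      proof (cases "\<tau> \<le> t")
        case True
        have "norm (y t x u) \<le> 1 + \<gamma> (nU u)" using H\<tau> u t c True by simp
        moreover have "\<gamma> (nU u) \<le> \<gamma> R" using K_mono[OF gK hnU[OF u], of R] c by simp
        ultimately show ?thesis by simp
      next
        case False
        then have "t < \<tau>" by simp
        have "max (norm x) (nU u) < R" using c .
        then have "norm x < R" "nU u < R" by auto
        then have "norm (y t x u) \<in> {norm (y t (x::'x) u) | t x u. norm x < R \<and> u \<in> Us \<and> nU u < R \<and> t \<in> T \<and> t < \<tau>}"
          using u t c \<open>t < \<tau>\<close> by auto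
        then show ?thesis using M0 by force
      qed
    qed
  qed
  define I where "I = {(x::'x, u, t). u \<in> Us \<and> t \<in> T}"
  define m where "m = (\<lambda>(x::'x, u::real\<Rightarrow>'u, t::real). max (norm x) (nU u))"
  define v where "v = (\<lambda>(x::'x, u::real\<Rightarrow>'u, t::real). norm (y t x u))"
  have "\<exists>\<alpha>. class_Kinf \<alpha> \<and> (\<forall>i\<in>I. v i \<le> \<alpha> (m i))"
  proof (rule Kinf_major)
    show "\<forall>i\<in>I. 0 \<le> m i" unfolding I_def m_def by (rule ball3) (simp add: le_max_iff_disj)
    show "\<forall>i\<in>I. 0 \<le> v i" unfolding I_def v_def by (rule ball3) simp
    show "\<forall>\<epsilon>>0. \<exists>\<delta>>0. \<forall>i\<in>I. m i < \<delta> \<longrightarrow> v i \<le> \<epsilon>"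
    proof (intro allI impI)
      fix \<epsilon> :: real assume "\<epsilon> > 0"
      then obtain \<delta> where d: "\<delta> > 0" "\<forall>x u t. u \<in> Us \<longrightarrow> t \<in> T \<longrightarrow> max (norm x) (nU u) < \<delta> \<longrightarrow> norm (y t x u) \<le> \<epsilon>"
        using loc by blast
      show "\<exists>\<delta>>0. \<forall>i\<in>I. m i < \<delta> \<longrightarrow> v i \<le> \<epsilon>"
        by (intro exI[of _ \<delta>] conjI d(1)) (unfold I_def m_def v_def, rule ball3, use d(2) in simp)
    qed
    show "\<forall>R>0. \<exists>M. \<forall>i\<in>I. m i < R \<longrightarrow> v i \<le> M"
    proof (intro allI impI)
      fix R :: real assume "R > 0"
      then obtain M where d: "\<forall>x u t. u \<in> Us \<longrightarrow> t \<in> T \<longrightarrow> max (norm x) (nU u) < R \<longrightarrow> norm (y t x u) \<le> M"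
        using bnd by blast
      show "\<exists>M. \<forall>i\<in>I. m i < R \<longrightarrow> v i \<le> M"
        by (intro exI[of _ M]) (unfold I_def m_def v_def, rule ball3, use d in simp)
    qed
  qed
  then obtain \<alpha> where a: "class_Kinf \<alpha>" and Ha: "\<forall>i\<in>I. v i \<le> \<alpha> (m i)" by blast
  have aK: "class_K \<alpha>" using a by (rule Kinf_K)
  have "norm (y t x u) \<le> \<alpha> (norm x) + \<alpha> (nU u)" if u: "u \<in> Us" and t: "t \<in> T" for x u t
  proof -
    have "(x, u, t) \<in> I" using u t by (simp add: I_def)
    then have "v (x, u, t) \<le> \<alpha> (m (x, u, t))" using Ha by blast
    then have 1: "norm (y t x u) \<le> \<alpha> (max (norm x) (nU u))" by (simp add: v_def m_def)
    have 2: "0 \<le> \<alpha> (norm x)" "0 \<le> \<alpha> (nU u)" using K_nonneg[OF aK] hnU[OF u] by auto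
    show ?thesis using 1 2 by (cases "norm x \<le> nU u") (auto simp: max_def)
  qed
  then show ?thesis unfolding OUGS_def using a by blast
qed

lemma P4_IOS: assumes A1: "OUAG T Us nU \<phi> h" and A2: "OUGS T Us nU \<phi> h"
  shows "IOS T Us nU \<phi> h"
proof -
  obtain \<gamma>a where ga: "class_Kinf \<gamma>a" and H: "\<forall>\<epsilon>>0. \<forall>r>0. \<forall>s>0. \<exists>\<tau>\<in>T. \<forall>x. \<forall>u\<in>Us. \<forall>t\<in>T.
        norm x < r \<and> nU u < s \<and> t \<ge> \<tau> \<longrightarrow> norm (y t x u) \<le> \<epsilon> + \<gamma>a (nU u)"
    using A1 unfolding OUAG_def by blast
  obtain \<sigma> \<gamma> where s: "class_Kinf \<sigma>" and g: "class_Kinf \<gamma>"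
    and HG: "\<forall>x. \<forall>u\<in>Us. \<forall>t\<in>T. norm (y t x u) \<le> \<sigma> (norm x) + \<gamma> (nU u)"
    using A2 unfolding OUGS_def by blast
  have sK: "class_K \<sigma>" and gK: "class_K \<gamma>" and gaK: "class_K \<gamma>a" using s g ga by (auto intro: Kinf_K)
  define \<gamma>' where "\<gamma>' r = (\<sigma> r + \<gamma> r) + \<gamma>a r" for r
  have g': "class_Kinf \<gamma>'" unfolding \<gamma>'_def by (intro Kinf_add[OF Kinf_add[OF s gK] gaK])
  define I where "I = {(x::'x, u, t). u \<in> Us \<and> t \<in> T}"
  define a where "a = (\<lambda>(x::'x, u::real\<Rightarrow>'u, t::real). max 0 (norm (y t x u) - \<gamma>' (nU u)))"
  define nx where "nx = (\<lambda>(x::'x, u::real\<Rightarrow>'u, t::real). norm x)"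
  define st where "st = (\<lambda>(x::'x, u::real\<Rightarrow>'u, t::real). t)"
  have "\<exists>\<beta>. class_KL \<beta> \<and> (\<forall>i\<in>I. a i \<le> \<beta> (nx i) (st i))"
  proof (rule KL_major[OF s])
    show "\<forall>i\<in>I. 0 \<le> nx i" unfolding I_def nx_def by (rule ball3) simp
    show "\<forall>i\<in>I. 0 \<le> st i" unfolding I_def st_def by (rule ball3) (simp add: tnn)
    show "\<forall>i\<in>I. 0 \<le> a i" unfolding I_def a_def by (rule ball3) simp
    show "\<forall>i\<in>I. a i \<le> \<sigma> (nx i)" unfolding I_def a_def nx_def
    proof (rule ball3)
      fix x :: 'x and u t assume u: "u \<in> Us" and t: "t \<in> T"
      have "norm (y t x u) \<le> \<sigma> (norm x) + \<gamma> (nU u)" using HG u t by blast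
      moreover have "0 \<le> \<sigma> (nU u)" "0 \<le> \<gamma>a (nU u)" "0 \<le> \<sigma> (norm x)"
        using K_nonneg[OF sK] K_nonneg[OF gaK] hnU[OF u] by auto
      ultimately show "(case (x, u, t) of (x, u, t) \<Rightarrow> max 0 (norm (y t x u) - \<gamma>' (nU u))) \<le> \<sigma> (case (x, u, t) of (x, u, t) \<Rightarrow> norm x)"
        by (simp add: \<gamma>'_def)
    qed
    show "\<forall>\<epsilon>>0. \<forall>R>0. \<exists>\<tau>. \<forall>i\<in>I. nx i < R \<and> \<tau> \<le> st i \<longrightarrow> a i \<le> \<epsilon>"
    proof (intro allI impI)
      fix \<epsilon> R :: real assume e: "\<epsilon> > 0" and R: "R > 0"
      have "\<exists>\<tau>\<in>T. \<forall>x. \<forall>u\<in>Us. \<forall>t\<in>T. norm x < R \<and> nU u < R \<and> t \<ge> \<tau> \<longrightarrow> norm (y t x u) \<le> \<epsilon> + \<gamma>a (nU u)"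
        using H[rule_format, OF e R R] by simp
      then obtain \<tau> where H\<tau>: "\<forall>x. \<forall>u\<in>Us. \<forall>t\<in>T. norm x < R \<and> nU u < R \<and> t \<ge> \<tau> \<longrightarrow> norm (y t x u) \<le> \<epsilon> + \<gamma>a (nU u)"
        by (elim bexE)
      show "\<exists>\<tau>. \<forall>i\<in>I. nx i < R \<and> \<tau> \<le> st i \<longrightarrow> a i \<le> \<epsilon>"
      proof (intro exI[of _ \<tau>])
        show "\<forall>i\<in>I. nx i < R \<and> \<tau> \<le> st i \<longrightarrow> a i \<le> \<epsilon>" unfolding I_def a_def nx_def st_def
        proof (rule ball3)
          fix x :: 'x and u t assume u: "u \<in> Us" and t: "t \<in> T"
          have nn: "0 \<le> \<sigma> (nU u)" "0 \<le> \<gamma>a (nU u)" "0 \<le> \<gamma> (nU u)" "0 \<le> \<sigma> (norm x)"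
            using K_nonneg[OF sK] K_nonneg[OF gaK] K_nonneg[OF gK] hnU[OF u] by auto
          have "norm (y t x u) \<le> \<epsilon> + \<gamma>' (nU u)" if c: "norm x < R" "\<tau> \<le> t"
          proof (cases "nU u < R")
            case True
            then have "norm (y t x u) \<le> \<epsilon> + \<gamma>a (nU u)" using H\<tau> u t c by simp
            then show ?thesis using nn by (simp add: \<gamma>'_def)
          next
            case False
            have "norm (y t x u) \<le> \<sigma> (norm x) + \<gamma> (nU u)" using HG u t by blast
            moreover have "\<sigma> (norm x) \<le> \<sigma> (nU u)" using K_mono[OF sK, of "norm x" "nU u"] c False by simp
            ultimately show ?thesis using nn e by (simp add: \<gamma>'_def)
          qed
          then show "(case (x, u, t) of (x, u, t) \<Rightarrow> norm x) < R \<and> \<tau> \<le> (case (x, u, t) of (x, u, t) \<Rightarrow> t) \<longrightarrow>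
             (case (x, u, t) of (x, u, t) \<Rightarrow> max 0 (norm (y t x u) - \<gamma>' (nU u))) \<le> \<epsilon>"
            using e by auto
        qed
      qed
    qed
  qed
  then obtain \<beta> where b: "class_KL \<beta>" and Hb: "\<forall>i\<in>I. a i \<le> \<beta> (nx i) (st i)" by blast
  have "norm (y t x u) \<le> \<beta> (norm x) t + \<gamma>' (nU u)" if u: "u \<in> Us" and t: "t \<in> T" for x u t
  proof -
    have "(x, u, t) \<in> I" using u t by (simp add: I_def)
    then have "a (x, u, t) \<le> \<beta> (nx (x, u, t)) (st (x, u, t))" using Hb by blast
    then have "max 0 (norm (y t x u) - \<gamma>' (nU u)) \<le> \<beta> (norm x) t" by (simp add: a_def nx_def st_def)
    then show ?thesis by linarith
  qed
  then show ?thesis unfolding IOS_def using b g' by blast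
qed

end


theorem theorem1:
  fixes T :: "real set" and Us :: "(real \<Rightarrow> 'u::real_vector) set" and nU :: "(real \<Rightarrow> 'u) \<Rightarrow> real"
    and \<phi> :: "real \<Rightarrow> 'x::real_normed_vector \<Rightarrow> (real \<Rightarrow> 'u) \<Rightarrow> 'x"
    and h :: "'x \<Rightarrow> 'u \<Rightarrow> 'y::real_normed_vector"
  assumes "ctrl_sys T Us nU \<phi> h"
  shows "(IOS T Us nU \<phi> h \<longleftrightarrow> OUAG T Us nU \<phi> h \<and> OCEP T Us nU \<phi> h \<and> BORS T Us nU \<phi> h)
       \<and> (IOS T Us nU \<phi> h \<longleftrightarrow> OUAG T Us nU \<phi> h \<and> OULS T Us nU \<phi> h \<and> BORS T Us nU \<phi> h)
       \<and> (IOS T Us nU \<phi> h \<longleftrightarrow> OUAG T Us nU \<phi> h \<and> OUGS T Us nU \<phi> h)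
       \<and> (IOS T Us nU \<phi> h \<longleftrightarrow> OCAG T Us nU \<phi> h \<and> OULS T Us nU \<phi> h)"
proof -
  have hT: "T = \<nat> \<or> T = {0..}" using assms unfolding ctrl_sys_def by blast
  have hnU: "\<And>u. u \<in> Us \<Longrightarrow> 0 \<le> nU u" using assms unfolding ctrl_sys_def by blast
  interpret S: sysT T Us nU \<phi> h using hT hnU by unfold_locales auto
  have i1: "OUGS T Us nU \<phi> h" "OUAG T Us nU \<phi> h" "OCAG T Us nU \<phi> h"
    "OULS T Us nU \<phi> h" "BORS T Us nU \<phi> h" "OCEP T Us nU \<phi> h"
    if "IOS T Us nU \<phi> h"
  proof -
    show 1: "OUGS T Us nU \<phi> h" using S.IOS_OUGS[OF that] .
    show "OUAG T Us nU \<phi> h" using S.IOS_OUAG[OF that] .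
    show "OCAG T Us nU \<phi> h" using S.IOS_OCAG[OF that] .
    show 2: "OULS T Us nU \<phi> h" using S.OUGS_OULS[OF 1] .
    show "BORS T Us nU \<phi> h" using S.OUGS_BORS[OF 1] .
    show "OCEP T Us nU \<phi> h" using S.OULS_OCEP[OF 2] .
  qed
  have p2: "IOS T Us nU \<phi> h" if "OUAG T Us nU \<phi> h" "OCEP T Us nU \<phi> h" "BORS T Us nU \<phi> h"
    using S.P4_IOS[OF that(1) S.P2_OUGS[OF that]] .
  have p3: "IOS T Us nU \<phi> h" if "OUAG T Us nU \<phi> h" "OULS T Us nU \<phi> h" "BORS T Us nU \<phi> h"
    using p2[OF that(1) S.OULS_OCEP[OF that(2)] that(3)] .
  have p4: "IOS T Us nU \<phi> h" if "OUAG T Us nU \<phi> h" "OUGS T Us nU \<phi> h"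
    using S.P4_IOS[OF that] .
  have p5: "IOS T Us nU \<phi> h" if "OCAG T Us nU \<phi> h" "OULS T Us nU \<phi> h"
    using p3[OF S.OCAG_OUAG_BORS(1)[OF that(1)] that(2) S.OCAG_OUAG_BORS(2)[OF that(1)]] .
  show ?thesis using i1 p2 p3 p4 p5 by blast
qed

end
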